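(* Let $n\ge 4$ and $R=\mathbb{C}[z_1,\dots,z_n]$. Then there exist an integer $m$, an integer $P<n$, and homogeneous polynomials $f_1,\dots,f_P,g\in R$ of degree $m$ with $\{f_1,\dots,f_P,g\}$ linearly independent over $\mathbb{C}$, such that, with $I^+=\langle f_1,\dots,f_P\rangle$, one has $\langle g\rangle_{m+1}\subseteq I^+_{m+1}$.
   Context: For a homogeneous ideal $I\subseteq R$, $I_{d}$ denotes its homogeneous component of degree $d$. *)

theory Defs
  imports Complex_Main "HOL-Library.Poly_Mapping"
begin

text \<open>Polynomials over the complex numbers in countably many variables z_0, z_1, ...:
  a monomial is a finitely supported exponent vector nat =>0 nat, a polynomial a finitely
  supported map from monomials to coefficients.\<close>

type_synonym cpoly = "(nat \<Rightarrow>\<^sub>0 nat) \<Rightarrow>\<^sub>0 complex"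

definition mon_deg :: "(nat \<Rightarrow>\<^sub>0 nat) \<Rightarrow> nat" where
  "mon_deg a = (\<Sum>i\<in>Poly_Mapping.keys a. Poly_Mapping.lookup a i)"

text \<open>The ring R = C[z_1,...,z_n]: polynomials only involving the variables with index < n.\<close>
definition in_R :: "nat \<Rightarrow> cpoly \<Rightarrow> bool" where
  "in_R n p \<longleftrightarrow> (\<forall>a\<in>Poly_Mapping.keys p. Poly_Mapping.keys a \<subseteq> {..<n})"

text \<open>Homogeneous of degree d (the zero polynomial is homogeneous of every degree).\<close>
definition homogeneous :: "nat \<Rightarrow> cpoly \<Rightarrow> bool" where
  "homogeneous d p \<longleftrightarrow> (\<forall>a\<in>Poly_Mapping.keys p. mon_deg a = d)"

definition cmult :: "complex \<Rightarrow> cpoly \<Rightarrow> cpoly" where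
  "cmult c p = Poly_Mapping.single 0 c * p"

definition in_ideal :: "nat \<Rightarrow> (nat \<Rightarrow> cpoly) \<Rightarrow> nat \<Rightarrow> cpoly \<Rightarrow> bool" where
  "in_ideal n f k h \<longleftrightarrow> (\<exists>q. (\<forall>i<k. in_R n (q i)) \<and> h = (\<Sum>i<k. q i * f i))"

end

theory Submission imports Defs begin

definition E :: "nat \<Rightarrow> (nat \<Rightarrow>\<^sub>0 nat)" where "E i = Poly_Mapping.single i 1"
definition X :: "nat \<Rightarrow> cpoly" where "X i = Poly_Mapping.single (E i) 1"

lemma expand: "q = (\<Sum>b\<in>Poly_Mapping.keys q. Poly_Mapping.single b (Poly_Mapping.lookup q b))"
proof (rule poly_mapping_eqI)
  fix k
  show "Poly_Mapping.lookup q k = Poly_Mapping.lookup (\<Sum>b\<in>Poly_Mapping.keys q. Poly_Mapping.single b (Poly_Mapping.lookup q b)) k"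
    by (simp add: lookup_sum lookup_single when_def in_keys_iff)
qed

lemma lookup_cmult: "Poly_Mapping.lookup (cmult c p) k = c * Poly_Mapping.lookup p k"
proof -
  have "cmult c p = (\<Sum>b\<in>Poly_Mapping.keys p. Poly_Mapping.single b (c * Poly_Mapping.lookup p b))"
    unfolding cmult_def by (subst expand[of p]) (simp add: sum_distrib_left mult_single)
  then show ?thesis
    by (simp add: lookup_sum lookup_single when_def in_keys_iff)
qed

lemma lookup_mult_mono: "Poly_Mapping.lookup (q * Poly_Mapping.single (\<mu>::nat\<Rightarrow>\<^sub>0nat) (1::complex)) \<mu> = Poly_Mapping.lookup q 0"
proof -
  have "q * Poly_Mapping.single \<mu> 1 = (\<Sum>b\<in>Poly_Mapping.keys q. Poly_Mapping.single (b + \<mu>) (Poly_Mapping.lookup q b))"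
    by (subst expand[of q]) (simp add: sum_distrib_right mult_single)
  then show ?thesis
    by (simp add: lookup_sum lookup_single when_def in_keys_iff)
qed

lemma mon_deg_sum: "finite S \<Longrightarrow> Poly_Mapping.keys a \<subseteq> S \<Longrightarrow> mon_deg a = sum (Poly_Mapping.lookup a) S"
  unfolding mon_deg_def by (rule sum.mono_neutral_left) (auto simp: in_keys_iff)

lemma mon_deg_EE: "mon_deg (E i + E j) = 2"
proof -
  have "mon_deg (E i + E j) = sum (Poly_Mapping.lookup (E i + E j)) {i, j}"
    by (rule mon_deg_sum) (use keys_add[of "E i" "E j"] in \<open>auto simp: E_def\<close>)
  then show ?thesis by (cases "i = j") (auto simp: E_def lookup_add lookup_single when_def)
qed

lemma EE_eq: "E a + E b = E c + E d \<longleftrightarrow> (a = c \<and> b = d) \<or> (a = d \<and> b = c)"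
proof
  assume h: "E a + E b = E c + E d"
  have "\<And>k. Poly_Mapping.lookup (E a + E b) k = Poly_Mapping.lookup (E c + E d) k" using h by simp
  then have l: "\<And>k. ((1::nat) when a = k) + (1 when b = k) = (1 when c = k) + (1 when d = k)"
    by (simp add: E_def lookup_add lookup_single)
  show "(a = c \<and> b = d) \<or> (a = d \<and> b = c)"
    using l[of a] l[of b] l[of c] l[of d] by (auto simp: when_def split: if_splits)
next
  assume "(a = c \<and> b = d) \<or> (a = d \<and> b = c)"
  then show "E a + E b = E c + E d" by (auto simp: add.commute)
qed

lemma XX: "X i * X j = Poly_Mapping.single (E i + E j) 1"
  by (simp add: X_def mult_single)

lemma lookup_XX: "Poly_Mapping.lookup (X i * X j) (E a + E b) = (if (i = a \<and> j = b) \<or> (i = b \<and> j = a) then 1 else 0)"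
  by (simp add: XX lookup_single when_def EE_eq)

lemma hom_add: "homogeneous d p \<Longrightarrow> homogeneous d q \<Longrightarrow> homogeneous d (p + q)"
  unfolding homogeneous_def using keys_add[of p q] by blast

lemma hom_XX: "homogeneous 2 (X i * X j)"
  by (simp add: XX homogeneous_def mon_deg_EE)

lemma inR_add: "in_R n p \<Longrightarrow> in_R n q \<Longrightarrow> in_R n (p + q)"
  unfolding in_R_def using keys_add[of p q] by blast

lemma inR_mult:
  assumes p: "in_R n p" and q: "in_R n q" shows "in_R n (p * q)"
  unfolding in_R_def
proof
  fix a assume a: "a \<in> Poly_Mapping.keys (p * q)"
  then obtain b c where bc: "a = b + c" "b \<in> Poly_Mapping.keys p" "c \<in> Poly_Mapping.keys q"
    using keys_mult by blast
  have "Poly_Mapping.keys b \<subseteq> {..<n}" "Poly_Mapping.keys c \<subseteq> {..<n}"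
    using p q bc by (auto simp: in_R_def)
  then show "Poly_Mapping.keys a \<subseteq> {..<n}" using bc(1) keys_add[of b c] by blast
qed

lemma inR_single: "Poly_Mapping.keys b \<subseteq> {..<n} \<Longrightarrow> in_R n (Poly_Mapping.single b c)"
  by (simp add: in_R_def)

lemma inR_X: "i < n \<Longrightarrow> in_R n (X i)"
  by (simp add: X_def E_def inR_single)

lemma inR_one: "in_R n 1" by (simp add: in_R_def)
lemma inR_zero: "in_R n 0" by (simp add: in_R_def)
lemma inR_neg: "in_R n p \<Longrightarrow> in_R n (- p)" by (simp add: in_R_def)

lemma id_zero: "in_ideal n f k 0"
  unfolding in_ideal_def by (rule exI[of _ "\<lambda>_. 0"]) (simp add: inR_zero)

lemma id_add: "in_ideal n f k a \<Longrightarrow> in_ideal n f k b \<Longrightarrow> in_ideal n f k (a + b)"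
  unfolding in_ideal_def
proof (elim exE conjE)
  fix qa qb assume "\<forall>i<k. in_R n (qa i)" "a = (\<Sum>i<k. qa i * f i)" "\<forall>i<k. in_R n (qb i)" "b = (\<Sum>i<k. qb i * f i)"
  then show "\<exists>q. (\<forall>i<k. in_R n (q i)) \<and> a + b = (\<Sum>i<k. q i * f i)"
    by (intro exI[of _ "\<lambda>i. qa i + qb i"]) (simp add: inR_add distrib_right sum.distrib)
qed

lemma id_mult: "in_R n r \<Longrightarrow> in_ideal n f k a \<Longrightarrow> in_ideal n f k (r * a)"
  unfolding in_ideal_def
proof (elim exE conjE)
  fix qa assume "in_R n r" "\<forall>i<k. in_R n (qa i)" "a = (\<Sum>i<k. qa i * f i)"
  then show "\<exists>q. (\<forall>i<k. in_R n (q i)) \<and> r * a = (\<Sum>i<k. q i * f i)"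
    by (intro exI[of _ "\<lambda>i. r * qa i"]) (simp add: inR_mult sum_distrib_left mult.assoc)
qed

lemma id_gen: assumes "i < k" shows "in_ideal n f k (f i)"
proof -
  have "(\<Sum>j<k. (if j = i then 1 else 0) * f j) = (\<Sum>j<k. if j = i then f j else 0)"
    by (rule sum.cong) auto
  also have "\<dots> = f i" using assms by (simp add: sum.delta')
  finally show ?thesis unfolding in_ideal_def
    by (intro exI[of _ "\<lambda>j. if j = i then 1 else 0"]) (simp add: inR_one inR_zero)
qed

lemma id_diff: "in_ideal n f k a \<Longrightarrow> in_ideal n f k b \<Longrightarrow> in_ideal n f k (a - b)"
  using id_add[of n f k a "(-1) * b"] id_mult[of n "-1" f k b] inR_neg[OF inR_one] by simp

lemma id_sum: "finite A \<Longrightarrow> (\<And>x. x \<in> A \<Longrightarrow> in_ideal n f k (u x)) \<Longrightarrow> in_ideal n f k (\<Sum>x\<in>A. u x)"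
  by (induction A rule: finite_induct) (auto simp: id_zero id_add)

lemma id_genm: "i < k \<Longrightarrow> in_R n r \<Longrightarrow> in_ideal n f k (r * f i)"
  by (simp add: id_gen id_mult)

lemma lemA:
  assumes "in_R n q" "Poly_Mapping.lookup q 0 = 0" "\<And>j. j < n \<Longrightarrow> in_ideal n f k (X j * g)"
  shows "in_ideal n f k (q * g)"
proof -
  have "q * g = (\<Sum>b\<in>Poly_Mapping.keys q. Poly_Mapping.single b (Poly_Mapping.lookup q b) * g)"
    by (subst expand[of q]) (simp add: sum_distrib_right)
  also have "in_ideal n f k \<dots>"
  proof (rule id_sum)
    fix b assume b: "b \<in> Poly_Mapping.keys q"
    then have "b \<noteq> 0" using assms(2) by (auto simp: in_keys_iff)
    then obtain j where j: "j \<in> Poly_Mapping.keys b"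
      by (metis all_not_in_conv keys_eq_empty)
    have bn: "Poly_Mapping.keys b \<subseteq> {..<n}" using assms(1) b by (auto simp: in_R_def)
    define b' where "b' = Poly_Mapping.update j (Poly_Mapping.lookup b j - 1) b"
    have "b' + E j = b"
      by (rule poly_mapping_eqI) (use j in \<open>auto simp: b'_def lookup_add lookup_update E_def lookup_single when_def in_keys_iff\<close>)
    then have eq: "Poly_Mapping.single b (Poly_Mapping.lookup q b) * g
        = Poly_Mapping.single b' (Poly_Mapping.lookup q b) * (X j * g)"
      by (simp add: X_def mult_single mult.assoc[symmetric])
    have b'n: "Poly_Mapping.keys b' \<subseteq> {..<n}" using bn j by (auto simp: b'_def keys_update)
    have jn: "j < n" using j bn by auto
    show "in_ideal n f k (Poly_Mapping.single b (Poly_Mapping.lookup q b) * g)"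
      unfolding eq by (rule id_mult[OF inR_single[OF b'n] assms(3)[OF jn]])
  qed simp
  finally show ?thesis .
qed

definition F :: "nat \<Rightarrow> cpoly" where
  "F i = (if i = 0 then X 0 * X 2 else if i = 1 then X 1 * X 3
          else if i = 2 then X 0 * X 3 + X 1 * X 2 else X 0 * X (i + 1))"

definition G :: cpoly where "G = X 0 * X 3"

lemma delta_sum: "k < (N::nat) \<Longrightarrow> (\<forall>i<N. v i = (if i = k then 1 else 0)) \<Longrightarrow> (\<Sum>i<N. c i * v i) = (c k :: complex)"
proof -
  assume k: "k < N" and v: "\<forall>i<N. v i = (if i = k then 1 else 0)"
  have "(\<Sum>i<N. c i * v i) = (\<Sum>i<N. if i = k then c i else 0)"
    by (rule sum.cong) (use v in auto)
  also have "\<dots> = c k" using k by (simp only: sum.delta finite_lessThan lessThan_iff if_True)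
  finally show ?thesis .
qed

lemma lookF: "Poly_Mapping.lookup (F i) (E a + E b) =
   (if i = 0 then Poly_Mapping.lookup (X 0 * X 2) (E a + E b)
    else if i = 1 then Poly_Mapping.lookup (X 1 * X 3) (E a + E b)
    else if i = 2 then Poly_Mapping.lookup (X 0 * X 3) (E a + E b) + Poly_Mapping.lookup (X 1 * X 2) (E a + E b)
    else Poly_Mapping.lookup (X 0 * X (i+1)) (E a + E b))"
  by (simp add: F_def lookup_add)

lemma F_inR_hom: "i < n - 1 \<Longrightarrow> 4 \<le> n \<Longrightarrow> in_R n (F i) \<and> homogeneous 2 (F i)"
  by (auto simp: F_def inR_add inR_mult inR_X hom_add hom_XX)

theorem proposition3:
  fixes n :: nat
  assumes "n \<ge> 4"
  shows "\<exists>(m::nat) (P::nat) (f::nat \<Rightarrow> cpoly) (g::cpoly).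
    P < n \<and>
    (\<forall>i<P. in_R n (f i) \<and> homogeneous m (f i)) \<and>
    in_R n g \<and> homogeneous m g \<and>
    (\<forall>c::nat \<Rightarrow> complex.
       (\<Sum>i<P. cmult (c i) (f i)) + cmult (c P) g = 0 \<longrightarrow> (\<forall>i\<le>P. c i = 0)) \<and>
    (\<forall>h. in_ideal n (\<lambda>_. g) 1 h \<and> homogeneous (m + 1) h \<longrightarrow> in_ideal n f P h)"
proof -
  let ?P = "n - 1"
  have Pn: "?P < n" using assms by simp
  have fR: "\<forall>i<?P. in_R n (F i) \<and> homogeneous 2 (F i)" using F_inR_hom assms by blast
  have gR: "in_R n G" "homogeneous 2 G" using assms by (auto simp: G_def inR_mult inR_X hom_XX)
  have indep: "\<forall>c::nat \<Rightarrow> complex.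
       (\<Sum>i<?P. cmult (c i) (F i)) + cmult (c ?P) G = 0 \<longrightarrow> (\<forall>i\<le>?P. c i = 0)"
  proof (rule allI, rule impI)
    fix c :: "nat \<Rightarrow> complex"
    assume S: "(\<Sum>i<?P. cmult (c i) (F i)) + cmult (c ?P) G = 0"
    have L: "(\<Sum>i<?P. c i * Poly_Mapping.lookup (F i) \<mu>) + c ?P * Poly_Mapping.lookup G \<mu> = 0" for \<mu>
    proof -
      have "Poly_Mapping.lookup ((\<Sum>i<?P. cmult (c i) (F i)) + cmult (c ?P) G) \<mu> = 0" using S by simp
      then show ?thesis by (simp add: lookup_add lookup_sum lookup_cmult)
    qed
    have c0: "c 0 = 0"
    proof -
      have "(\<Sum>i<?P. c i * Poly_Mapping.lookup (F i) (E 0 + E 2)) = c 0"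
        by (rule delta_sum) (use assms in \<open>auto simp: lookF lookup_XX\<close>)
      moreover have "Poly_Mapping.lookup G (E 0 + E 2) = 0" by (simp add: G_def lookup_XX)
      ultimately show ?thesis using L[of "E 0 + E 2"] by simp
    qed
    have c1: "c 1 = 0"
    proof -
      have "(\<Sum>i<?P. c i * Poly_Mapping.lookup (F i) (E 1 + E 3)) = c 1"
        by (rule delta_sum) (use assms in \<open>auto simp: lookF lookup_XX\<close>)
      moreover have "Poly_Mapping.lookup G (E 1 + E 3) = 0" by (simp add: G_def lookup_XX)
      ultimately show ?thesis using L[of "E 1 + E 3"] by simp
    qed
    have c2: "c 2 = 0"
    proof -
      have "(\<Sum>i<?P. c i * Poly_Mapping.lookup (F i) (E 1 + E 2)) = c 2"
        by (rule delta_sum) (use assms in \<open>auto simp: lookF lookup_XX\<close>)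
      moreover have "Poly_Mapping.lookup G (E 1 + E 2) = 0" by (simp add: G_def lookup_XX)
      ultimately show ?thesis using L[of "E 1 + E 2"] by simp
    qed
    have cP: "c ?P = 0"
    proof -
      have "(\<Sum>i<?P. c i * Poly_Mapping.lookup (F i) (E 0 + E 3)) = c 2"
        by (rule delta_sum) (use assms in \<open>auto simp: lookF lookup_XX\<close>)
      moreover have "Poly_Mapping.lookup G (E 0 + E 3) = 1" by (simp add: G_def lookup_XX)
      ultimately show ?thesis using L[of "E 0 + E 3"] c2 by simp
    qed
    have ck: "c k = 0" if "3 \<le> k" "k < ?P" for k
    proof -
      have "(\<Sum>i<?P. c i * Poly_Mapping.lookup (F i) (E 0 + E (k+1))) = c k"
        by (rule delta_sum) (use that in \<open>auto simp: lookF lookup_XX\<close>)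
      moreover have "Poly_Mapping.lookup G (E 0 + E (k+1)) = 0" using that by (simp add: G_def lookup_XX)
      ultimately show ?thesis using L[of "E 0 + E (k+1)"] by simp
    qed
    show "\<forall>i\<le>?P. c i = 0"
    proof (intro allI impI)
      fix i assume "i \<le> ?P"
      then consider "i = 0" | "i = 1" | "i = 2" | "3 \<le> i \<and> i < ?P" | "i = ?P" by linarith
      then show "c i = 0" using c0 c1 c2 cP ck by cases auto
    qed
  qed
  have gens: "in_ideal n F ?P (X j * G)" if "j < n" for j
  proof -
    have R: "in_R n (X i)" if "i < 4" for i using that assms by (intro inR_X) simp
    consider "j = 0" | "j = 1" | "j = 2" | "j = 3" | "4 \<le> j" by linarith
    then show ?thesis
    proof cases
      case 1
      have "X j * G = X 0 * F 2 - X 1 * F 0" using 1 by (simp add: F_def G_def algebra_simps)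
      then show ?thesis using assms R by (auto intro!: id_diff id_genm)
    next
      case 2
      have "X j * G = X 0 * F 1" using 2 by (simp add: F_def G_def algebra_simps)
      then show ?thesis using assms R by (auto intro!: id_genm)
    next
      case 3
      have "X j * G = X 3 * F 0" using 3 by (simp add: F_def G_def algebra_simps)
      then show ?thesis using assms R by (auto intro!: id_genm)
    next
      case 4
      have "X j * G = X 3 * F 2 - X 2 * F 1" using 4 by (simp add: F_def G_def algebra_simps)
      then show ?thesis using assms R by (auto intro!: id_diff id_genm)
    next
      case 5
      have "j - 1 \<noteq> 0" "j - 1 \<noteq> 1" "j - 1 \<noteq> 2" "j - 1 + 1 = j" using 5 by auto
      then have "F (j - 1) = X 0 * X j" unfolding F_def by presburger
      then have "X j * G = X 3 * F (j - 1)" by (simp add: G_def algebra_simps)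
      then show ?thesis using assms R 5 that by (auto intro!: id_genm)
    qed
  qed
  have idl: "\<forall>h. in_ideal n (\<lambda>_. G) 1 h \<and> homogeneous (2 + 1) h \<longrightarrow> in_ideal n F ?P h"
  proof (intro allI impI, elim conjE)
    fix h assume hI: "in_ideal n (\<lambda>_. G) 1 h" and hh: "homogeneous (2 + 1) h"
    obtain q where q: "in_R n (q 0)" "h = q 0 * G"
      using hI by (auto simp: in_ideal_def)
    have "Poly_Mapping.lookup h (E 0 + E 3) = Poly_Mapping.lookup (q 0) 0"
      unfolding q(2) G_def XX by (rule lookup_mult_mono)
    moreover have "Poly_Mapping.lookup h (E 0 + E 3) = 0"
    proof (rule ccontr)
      assume "Poly_Mapping.lookup h (E 0 + E 3) \<noteq> 0"
      then have "E 0 + E 3 \<in> Poly_Mapping.keys h" by (simp add: in_keys_iff)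
      then show False using hh mon_deg_EE[of 0 3] by (auto simp: homogeneous_def)
    qed
    ultimately have "Poly_Mapping.lookup (q 0) 0 = 0" by simp
    then show "in_ideal n F ?P h" unfolding q(2) by (rule lemA[OF q(1)]) (rule gens)
  qed
  show ?thesis
    by (rule exI[of _ 2], rule exI[of _ ?P], rule exI[of _ F], rule exI[of _ G])
       (use Pn fR gR indep idl in blast)
qed

end
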